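(* Let $n,d\ge 1$, $r\in[0,1]$, $\omega\ge 0$, $\alpha\in(0,1]$, $K_\omega,K_\alpha>0$, and $0<\mu\le L\le L_{\max}\le nL$, with $L_{\max}$ known. Put $\mu^r_{\omega,\alpha}=\frac{rd}{(1-r)K_\omega+rK_\alpha}$ and $K^r=(1-r)K_\omega+rK_\alpha$. For $p,\tau\in(0,1]$ let $$T(p,\tau)=\max\Big\{\sqrt{\tfrac{L}{\alpha p\mu}},\sqrt{\tfrac{L}{\alpha\tau\mu}},\sqrt{\tfrac{\sqrt{LL_{\max}}(\omega+1)\sqrt{\omega\tau}}{\alpha\sqrt n\,\mu}},\sqrt{\tfrac{\sqrt{LL_{\max}}\sqrt{\omega+1}\sqrt{\omega\tau}}{\alpha\sqrt p\sqrt n\,\mu}},\sqrt{\tfrac{L_{\max}\omega(\omega+1)^2p}{n\mu}},\sqrt{\tfrac{L_{\max}\omega}{np\mu}},\tfrac1\alpha,\tfrac1\tau,\omega+1,\tfrac1p\Big\}$$ and $M(p,\tau)=\big((1-r)K_\omega+r(K_\alpha+pd)\big)\,T(p,\tau)+d$. Choose $$p^\circ=\min\Big\{1,\frac{1}{\mu^r_{\omega,\alpha}},\Big(\frac{Ln}{L_{\max}}\Big)^{1/3}\frac{1}{\omega+1},\max\Big\{\frac1{\omega+1},\Big(\frac{Ln}{L_{\max}}\Big)^{1/2}\frac{1}{\sqrt\alpha(\omega+1)^{3/2}}\Big\}\Big\}\ (1/0=+\infty),$$ $$\tau^\circ=\min\Big\{1,\Big(\frac{Ln}{L_{\max}}\Big)^{1/3}\min\Big\{\frac{1}{\omega+1},\frac{(p^\circ)^{1/3}}{(\omega+1)^{2/3}}\Big\}\Big\}.$$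 Then, up to universal multiplicative constants (and logarithmic factors): (i) $(p^\circ,\tau^\circ)$ minimizes $M(p,\tau)$ over $p,\tau\in(0,1]$; (ii) $T(p^\circ,\tau^\circ)$ is of the order of $$T^{\mathrm{optimistic}}=\max\Big\{\sqrt{\tfrac{L\max\{1,\mu^r_{\omega,\alpha}\}}{\alpha\mu}},\sqrt{\tfrac{L^{2/3}L_{\max}^{1/3}(\omega+1)}{\alpha n^{1/3}\mu}},\sqrt{\tfrac{L^{1/2}L_{\max}^{1/2}(\omega+1)^{3/2}}{\sqrt{\alpha n}\,\mu}},\sqrt{\tfrac{L_{\max}\omega\max\{\omega+1,\mu^r_{\omega,\alpha}\}}{n\mu}},\tfrac1\alpha,\omega+1,\mu^r_{\omega,\alpha}\Big\};$$ (iii) $M(p^\circ,\tau^\circ)$ is of the order of $K^r\,T^{\mathrm{optimistic}}+d$.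
   Context: This concerns the method 2Direction for minimizing $f=\frac1n\sum_{i=1}^n f_i$ over $\mathbb R^d$ with $n$ workers, where each $f_i$ is $L_i$-smooth and convex, $L_{\max}=\max_i L_i$, $f$ is $L$-smooth and $\mu$-strongly convex. Workers use unbiased compressors with variance parameter $\omega$ ($\mathbb E[\mathcal C(x)]=x$, $\mathbb E\|\mathcal C(x)-x\|^2\le\omega\|x\|^2$) and expected density $K_\omega$ (expected density of $\mathcal C$: $\sup_x\mathbb E\|\mathcal C(x)\|_0$); the server uses a biased compressor with contraction parameter $\alpha$ ($\mathbb E\|\mathcal C(x)-x\|^2\le(1-\alpha)\|x\|^2$) and expected density $K_\alpha$. The method has hyper-parameters $p$ (a probability) and $\tau$ (a momentum). Up to logarithmic factors, $T(p,\tau)$ is the number of iterations in the strongly convex case and $M(p,\tau)$ the total communication complexity $(1-r)\cdot(\text{worker-to-server cost})+r\cdot(\text{server-to-worker cost})$, $r\in[0,1]$ weighting the two directions. Here the ratio $L_{\max}/L$ is assumed known and may be used to choose $p,\tau$. "Of the order of" means equal up to universal positive multiplicative constants. *)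

theory Defs
  imports Complex_Main
begin

definition mu_r :: "nat \<Rightarrow> real \<Rightarrow> real \<Rightarrow> real \<Rightarrow> real" where
  "mu_r d r Kw Ka = r * real d / ((1 - r) * Kw + r * Ka)"

definition K_r :: "real \<Rightarrow> real \<Rightarrow> real \<Rightarrow> real" where
  "K_r r Kw Ka = (1 - r) * Kw + r * Ka"

definition T_fun :: "nat \<Rightarrow> real \<Rightarrow> real \<Rightarrow> real \<Rightarrow> real \<Rightarrow> real \<Rightarrow> real \<Rightarrow> real \<Rightarrow> real" where
  "T_fun n w a mu L Lmax p \<tau> = Max {
     sqrt (L / (a * p * mu)),
     sqrt (L / (a * \<tau> * mu)),
     sqrt (sqrt (L * Lmax) * (w + 1) * sqrt (w * \<tau>) / (a * sqrt (real n) * mu)),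
     sqrt (sqrt (L * Lmax) * sqrt (w + 1) * sqrt (w * \<tau>) / (a * sqrt p * sqrt (real n) * mu)),
     sqrt (Lmax * w * (w + 1)^2 * p / (real n * mu)),
     sqrt (Lmax * w / (real n * p * mu)),
     1 / a, 1 / \<tau>, w + 1, 1 / p}"

definition M_fun :: "nat \<Rightarrow> nat \<Rightarrow> real \<Rightarrow> real \<Rightarrow> real \<Rightarrow> real \<Rightarrow> real \<Rightarrow> real \<Rightarrow> real \<Rightarrow> real \<Rightarrow> real \<Rightarrow> real \<Rightarrow> real" where
  "M_fun n d r w a Kw Ka mu L Lmax p \<tau> =
     ((1 - r) * Kw + r * (Ka + p * real d)) * T_fun n w a mu L Lmax p \<tau> + real d"

text \<open>The term 1/mu_r is +infinity when mu_r = 0 (i.e. r = 0); since it sits inside a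
  minimum together with 1, it is then simply dropped, which we encode by replacing it by 1.\<close>
definition p_opt :: "nat \<Rightarrow> nat \<Rightarrow> real \<Rightarrow> real \<Rightarrow> real \<Rightarrow> real \<Rightarrow> real \<Rightarrow> real \<Rightarrow> real \<Rightarrow> real" where
  "p_opt n d r w a Kw Ka L Lmax =
     Min {1,
          (if mu_r d r Kw Ka = 0 then 1 else 1 / mu_r d r Kw Ka),
          (L * real n / Lmax) powr (1/3) / (w + 1),
          max (1 / (w + 1)) ((L * real n / Lmax) powr (1/2) / (sqrt a * (w + 1) powr (3/2)))}"

definition tau_opt :: "nat \<Rightarrow> nat \<Rightarrow> real \<Rightarrow> real \<Rightarrow> real \<Rightarrow> real \<Rightarrow> real \<Rightarrow> real \<Rightarrow> real \<Rightarrow> real" where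
  "tau_opt n d r w a Kw Ka L Lmax =
     min 1 ((L * real n / Lmax) powr (1/3) *
            min (1 / (w + 1)) (p_opt n d r w a Kw Ka L Lmax powr (1/3) / (w + 1) powr (2/3)))"

definition T_optimistic :: "nat \<Rightarrow> nat \<Rightarrow> real \<Rightarrow> real \<Rightarrow> real \<Rightarrow> real \<Rightarrow> real \<Rightarrow> real \<Rightarrow> real \<Rightarrow> real \<Rightarrow> real" where
  "T_optimistic n d r w a Kw Ka mu L Lmax = Max {
     sqrt (L * max 1 (mu_r d r Kw Ka) / (a * mu)),
     sqrt (L powr (2/3) * Lmax powr (1/3) * (w + 1) / (a * real n powr (1/3) * mu)),
     sqrt (L powr (1/2) * Lmax powr (1/2) * (w + 1) powr (3/2) / (sqrt (a * real n) * mu)),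
     sqrt (Lmax * w * max (w + 1) (mu_r d r Kw Ka) / (real n * mu)),
     1 / a, w + 1, mu_r d r Kw Ka}"

end

theory Submission
  imports Defs
begin

lemma lnle: "0 < u \<Longrightarrow> u \<le> v \<Longrightarrow> ln u \<le> ln (v::real)" by simp
lemma le_ln: "0 < u \<Longrightarrow> 0 < v \<Longrightarrow> ln u \<le> ln v \<Longrightarrow> u \<le> (v::real)" by simp

lemmas LS = ln_sqrt ln_mult ln_div ln_powr ln_realpow add_divide_distrib diff_divide_distrib

lemma partA:
  fixes n d :: nat and r w a Kw Ka mu L Lmax :: real
  assumes n: "n \<ge> 1" and w: "w \<ge> 0" and a: "0 < a" "a \<le> 1"
    and mu: "0 < mu" "mu \<le> L" "L \<le> Lmax" "Lmax \<le> real n * L"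
    and m0: "mu_r d r Kw Ka \<ge> 0"
  shows "T_fun n w a mu L Lmax (p_opt n d r w a Kw Ka L Lmax) (tau_opt n d r w a Kw Ka L Lmax)
         \<le> T_optimistic n d r w a Kw Ka mu L Lmax"
proof -
  define m where "m = mu_r d r Kw Ka"
  define x where "x = L * real n / Lmax"
  define p0 where "p0 = p_opt n d r w a Kw Ka L Lmax"
  define t0 where "t0 = tau_opt n d r w a Kw Ka L Lmax"
  define To where "To = T_optimistic n d r w a Kw Ka mu L Lmax"
  have Lp: "L > 0" and Lmp: "Lmax > 0" and np: "real n > 0" and W1: "w + 1 \<ge> 1"
    using mu n w by auto
  have m0': "m \<ge> 0" using m0 m_def by simp
  have x1: "x \<ge> 1" using mu Lp Lmp by (simp add: x_def field_simps)
  have xp: "x > 0" using x1 by simp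
  have lx: "ln x = ln L + ln (real n) - ln Lmax" using Lp Lmp np by (simp add: x_def ln_div ln_mult)
  have lx0: "ln x \<ge> 0" using x1 by simp
  have lW0: "ln (w+1) \<ge> 0" using W1 by simp
  have la0: "ln a \<le> 0" using a by simp
  have lLM: "ln L \<le> ln Lmax" "ln mu \<le> ln L" using mu Lp by auto
  have lMn: "ln Lmax \<le> ln (real n) + ln L"
  proof -
    have "ln Lmax \<le> ln (real n * L)" using mu Lmp by simp
    thus ?thesis using np Lp by (simp add: ln_mult)
  qed
  have lw: "w > 0 \<Longrightarrow> ln w \<le> ln (w+1)" by simp
  define c2 where "c2 = (if m = 0 then 1 else 1/m)"
  define c3 where "c3 = x powr (1/3) / (w+1)"
  define c4a where "c4a = 1/(w+1)"
  define c4b where "c4b = x powr (1/2) / (sqrt a * (w+1) powr (3/2))"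
  have p0eq: "p0 = Min {1, c2, c3, max c4a c4b}"
    by (simp add: p0_def p_opt_def c2_def c3_def c4a_def c4b_def m_def x_def)
  have c2p: "c2 > 0" using m0' by (simp add: c2_def)
  have c3p: "c3 > 0" using xp W1 by (simp add: c3_def)
  have c4ap: "c4a > 0" using W1 by (simp add: c4a_def)
  have c4bp: "c4b > 0" using xp W1 a by (simp add: c4b_def)
  have p0p: "p0 > 0" using c2p c3p c4ap c4bp by (simp add: p0eq)
  have p0le: "p0 \<le> 1" "p0 \<le> c2" "p0 \<le> c3" "p0 \<le> max c4a c4b" by (simp_all add: p0eq)
  have p0in: "p0 = 1 \<or> p0 = c2 \<or> p0 = c3 \<or> p0 = max c4a c4b"
    unfolding p0eq by (metis Min_in empty_not_insert finite.emptyI finite.insertI insertE singletonD)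
  have lc2: "m > 0 \<Longrightarrow> ln c2 = - ln m" by (simp add: c2_def ln_div)
  have c2m: "m = 0 \<Longrightarrow> c2 = 1" by (simp add: c2_def)
  have lc3: "3 * ln c3 = ln x - 3 * ln (w+1)" using xp W1 by (simp add: c3_def LS)
  have lc4a: "ln c4a = - ln (w+1)" using W1 by (simp add: c4a_def ln_div)
  have lc4b: "2 * ln c4b = ln x - ln a - 3 * ln (w+1)" using xp W1 a
    by (simp add: c4b_def LS)
  define P where "P = ln p0"
  have PA: "P \<le> 0" using p0le p0p by (simp add: P_def)
  have PB: "m > 0 \<Longrightarrow> P \<le> - ln m" using p0le(2) p0p lc2 unfolding P_def
    by (metis lnle)
  have PC: "3 * P \<le> ln x - 3 * ln (w+1)"
  proof -
    have "P \<le> ln c3" using p0le(3) p0p unfolding P_def by (metis lnle)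
    thus ?thesis using lc3 by linarith
  qed
  have PD: "P \<le> - ln (w+1) \<or> 2 * P \<le> ln x - ln a - 3 * ln (w+1)"
  proof -
    have "p0 \<le> c4a \<or> p0 \<le> c4b" using p0le(4) by linarith
    hence "P \<le> ln c4a \<or> P \<le> ln c4b" using p0p unfolding P_def by (metis lnle)
    thus ?thesis using lc4a lc4b by linarith
  qed
  have PE: "P = 0 \<or> (m > 0 \<and> P = - ln m) \<or> 3 * P = ln x - 3 * ln (w+1) \<or>
     (P \<ge> - ln (w+1) \<and> 2 * P \<ge> ln x - ln a - 3 * ln (w+1))"
  proof -
    have "ln c4a \<le> ln (max c4a c4b)" "ln c4b \<le> ln (max c4a c4b)" using c4ap c4bp by auto
    moreover have "m = 0 \<or> m > 0" using m0' by linarith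
    ultimately show ?thesis using p0in lc2 c2m lc3 lc4a lc4b unfolding P_def
      by (elim disjE) (auto simp: ln_one)
  qed
  define d1 where "d1 = x powr (1/3) * (1/(w+1))"
  define d2 where "d2 = x powr (1/3) * (p0 powr (1/3) / (w+1) powr (2/3))"
  have t0eq: "t0 = min 1 (min d1 d2)"
    unfolding t0_def tau_opt_def d1_def d2_def p0_def[symmetric] x_def[symmetric]
    using xp by (simp add: min_mult_distrib_left)
  have d1p: "d1 > 0" using xp W1 by (simp add: d1_def)
  have d2p: "d2 > 0" using xp W1 p0p by (simp add: d2_def)
  have t0p: "t0 > 0" using d1p d2p by (simp add: t0eq)
  have ld1: "3 * ln d1 = ln x - 3 * ln (w+1)" using xp W1 by (simp add: d1_def LS)
  have ld2: "3 * ln d2 = ln x + P - 2 * ln (w+1)" using xp W1 p0p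
    by (simp add: d2_def LS P_def)
  define Q where "Q = ln t0"
  have t0le: "t0 \<le> 1" "t0 \<le> d1" "t0 \<le> d2" by (simp_all add: t0eq)
  have QA0: "Q \<le> 0" "Q \<le> ln d1" "Q \<le> ln d2"
    using t0p t0le lnle unfolding Q_def by (metis ln_one)+
  have QA: "Q \<le> 0" "3 * Q \<le> ln x - 3 * ln (w+1)" "3 * Q \<le> ln x + P - 2 * ln (w+1)"
    using QA0 ld1 ld2 by linarith+
  have QE0: "Q = 0 \<or> Q = ln d1 \<or> Q = ln d2"
    unfolding Q_def t0eq min_def by auto
  have QE: "Q = 0 \<or> 3 * Q = ln x - 3 * ln (w+1) \<or> 3 * Q = ln x + P - 2 * ln (w+1)"
    using QE0 ld1 ld2 by linarith
  have To_ge: "sqrt (L * max 1 m / (a * mu)) \<le> To"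
    "sqrt (L powr (2/3) * Lmax powr (1/3) * (w + 1) / (a * real n powr (1/3) * mu)) \<le> To"
    "sqrt (L powr (1/2) * Lmax powr (1/2) * (w + 1) powr (3/2) / (sqrt (a * real n) * mu)) \<le> To"
    "sqrt (Lmax * w * max (w + 1) m / (real n * mu)) \<le> To" "1/a \<le> To" "w+1 \<le> To" "m \<le> To"
    by (simp_all add: To_def T_optimistic_def m_def le_max_iff_disj)
  have mxp: "max 1 m > 0" "max (w+1) m > 0" using W1 by auto
  have Top: "To > 0" using To_ge(5) a by (smt (verit) divide_pos_pos)
  have lo1: "ln L + ln (max 1 m) - ln a - ln mu \<le> 2 * ln To"
  proof -
    have "ln (sqrt (L * max 1 m / (a * mu))) \<le> ln To" using To_ge(1) Lp a mu by (intro lnle) auto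
    thus ?thesis using Lp a mu mxp by (simp add: LS)
  qed
  have lo2: "2 * ln L + ln Lmax + 3 * ln (w+1) - 3 * ln a - ln (real n) - 3 * ln mu \<le> 6 * ln To"
  proof -
    have "ln (sqrt (L powr (2/3) * Lmax powr (1/3) * (w + 1) / (a * real n powr (1/3) * mu))) \<le> ln To"
      using To_ge(2) Lp Lmp np W1 a mu by (intro lnle) auto
    thus ?thesis using Lp Lmp np W1 a mu by (simp add: LS)
  qed
  have lo3: "ln L + ln Lmax + 3 * ln (w+1) - ln a - ln (real n) - 2 * ln mu \<le> 4 * ln To"
  proof -
    have "ln (sqrt (L powr (1/2) * Lmax powr (1/2) * (w + 1) powr (3/2) / (sqrt (a * real n) * mu))) \<le> ln To"
      using To_ge(3) Lp Lmp np W1 a mu by (intro lnle) auto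
    thus ?thesis using Lp Lmp np W1 a mu by (simp add: LS)
  qed
  have lo4: "w > 0 \<Longrightarrow> ln Lmax + ln w + ln (max (w+1) m) - ln (real n) - ln mu \<le> 2 * ln To"
  proof -
    assume wp: "w > 0"
    have "ln (sqrt (Lmax * w * max (w + 1) m / (real n * mu))) \<le> ln To"
      using To_ge(4) Lmp np W1 wp mu by (intro lnle) auto
    thus ?thesis using Lmp np W1 wp mu mxp by (simp add: LS)
  qed
  have lo5: "- ln a \<le> ln To" using To_ge(5) a lnle by (metis ln_inverse inverse_eq_divide divide_pos_pos zero_less_one)
  have lo6: "ln (w+1) \<le> ln To" using To_ge(6) W1 lnle by simp
  have lo7: "m > 0 \<Longrightarrow> ln m \<le> ln To" using To_ge(7) lnle by simp
  have lmx: "ln (max 1 m) \<ge> 0" "m > 0 \<Longrightarrow> ln (max 1 m) \<ge> ln m"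
     "ln (max (w+1) m) \<ge> ln (w+1)" "m > 0 \<Longrightarrow> ln (max (w+1) m) \<ge> ln m" using W1 by auto
  have PE2: "P = 0 \<or> (P = - ln m \<and> ln m \<le> ln To \<and> ln m \<le> ln (max 1 m) \<and> ln m \<le> ln (max (w+1) m))
     \<or> 3 * P = ln x - 3 * ln (w+1) \<or>
     (P \<ge> - ln (w+1) \<and> 2 * P \<ge> ln x - ln a - 3 * ln (w+1))"
    using PE lo7 lmx(2) lmx(4) by blast
  note F = lo1 lo2 lo3 lo4 lo5 lo6 lo7 lmx lw la0 lW0 lx lx0 lLM lMn PA PB PC PD PE QA QE
  have t1: "sqrt (L / (a * p0 * mu)) \<le> To"
  proof (rule le_ln)
    show "0 < sqrt (L / (a * p0 * mu))" using Lp a p0p mu by simp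
    have "2 * ln (sqrt (L / (a * p0 * mu))) = ln L - ln a - P - ln mu"
      using Lp a p0p mu by (simp add: LS P_def)
    then show "ln (sqrt (L / (a * p0 * mu))) \<le> ln To" using PE2 lo1 lo2 lo3 lmx lx
      by (elim disjE conjE) linarith+
  qed (rule Top)
  have t2: "sqrt (L / (a * t0 * mu)) \<le> To"
  proof (rule le_ln)
    show "0 < sqrt (L / (a * t0 * mu))" using Lp a t0p mu by simp
    have "2 * ln (sqrt (L / (a * t0 * mu))) = ln L - ln a - Q - ln mu"
      using Lp a t0p mu by (simp add: LS Q_def)
    then show "ln (sqrt (L / (a * t0 * mu))) \<le> ln To" using QE PE2 lo1 lo2 lo3 lmx lx lx0 lW0
      by (elim disjE conjE) linarith+
  qed (rule Top)
  have t3: "sqrt (sqrt (L * Lmax) * (w + 1) * sqrt (w * t0) / (a * sqrt (real n) * mu)) \<le> To"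
  proof (cases "w = 0")
    case True then show ?thesis using Top by simp
  next
    case False
    then have wp: "w > 0" using w by simp
    show ?thesis
    proof (rule le_ln)
      show "0 < sqrt (sqrt (L * Lmax) * (w + 1) * sqrt (w * t0) / (a * sqrt (real n) * mu))"
        using Lp Lmp wp a t0p mu np by simp
      have "4 * ln (sqrt (sqrt (L * Lmax) * (w + 1) * sqrt (w * t0) / (a * sqrt (real n) * mu)))
        = ln L + ln Lmax + 2 * ln (w+1) + ln w + Q - 2 * ln a - ln (real n) - 2 * ln mu"
        using Lp Lmp wp a t0p mu np by (simp add: LS Q_def)
      then show "ln (sqrt (sqrt (L * Lmax) * (w + 1) * sqrt (w * t0) / (a * sqrt (real n) * mu))) \<le> ln To"
        using QA lw[OF wp] lx lo2 by linarith
    qed (rule Top)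
  qed
  have t4: "sqrt (sqrt (L * Lmax) * sqrt (w + 1) * sqrt (w * t0) / (a * sqrt p0 * sqrt (real n) * mu)) \<le> To"
  proof (cases "w = 0")
    case True then show ?thesis using Top by simp
  next
    case False
    then have wp: "w > 0" using w by simp
    show ?thesis
    proof (rule le_ln)
      show "0 < sqrt (sqrt (L * Lmax) * sqrt (w + 1) * sqrt (w * t0) / (a * sqrt p0 * sqrt (real n) * mu))"
        using Lp Lmp wp a t0p p0p mu np by simp
      have "4 * ln (sqrt (sqrt (L * Lmax) * sqrt (w + 1) * sqrt (w * t0) / (a * sqrt p0 * sqrt (real n) * mu)))
        = ln L + ln Lmax + ln (w+1) + ln w + Q - 2 * ln a - P - ln (real n) - 2 * ln mu"
        using Lp Lmp wp a t0p p0p mu np by (simp add: LS Q_def P_def)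
      then show "ln (sqrt (sqrt (L * Lmax) * sqrt (w + 1) * sqrt (w * t0) / (a * sqrt p0 * sqrt (real n) * mu))) \<le> ln To"
        using PE2 QA lw[OF wp] lx lx0 lW0 lo1 lo2 lmx by (elim disjE conjE) linarith+
    qed (rule Top)
  qed
  have t5: "sqrt (Lmax * w * (w + 1)^2 * p0 / (real n * mu)) \<le> To"
  proof (cases "w = 0")
    case True then show ?thesis using Top by simp
  next
    case False
    then have wp: "w > 0" using w by simp
    show ?thesis
    proof (rule le_ln)
      show "0 < sqrt (Lmax * w * (w + 1)^2 * p0 / (real n * mu))"
        using Lmp wp p0p mu np by simp
      have "2 * ln (sqrt (Lmax * w * (w + 1)^2 * p0 / (real n * mu)))
        = ln Lmax + ln w + 2 * ln (w+1) + P - ln (real n) - ln mu"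
        using Lmp wp p0p mu np by (simp add: LS P_def)
      then show "ln (sqrt (Lmax * w * (w + 1)^2 * p0 / (real n * mu))) \<le> ln To"
        using PD lw[OF wp] lx lo3 lo4[OF wp] lmx by (elim disjE conjE) linarith+
    qed (rule Top)
  qed
  have t6: "sqrt (Lmax * w / (real n * p0 * mu)) \<le> To"
  proof (cases "w = 0")
    case True then show ?thesis using Top by simp
  next
    case False
    then have wp: "w > 0" using w by simp
    show ?thesis
    proof (rule le_ln)
      show "0 < sqrt (Lmax * w / (real n * p0 * mu))"
        using Lmp wp p0p mu np by simp
      have "2 * ln (sqrt (Lmax * w / (real n * p0 * mu)))
        = ln Lmax + ln w - P - ln (real n) - ln mu"
        using Lmp wp p0p mu np by (simp add: LS P_def)
      then show "ln (sqrt (Lmax * w / (real n * p0 * mu))) \<le> ln To"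
        using PE2 lx lx0 lW0 lo4[OF wp] lmx by (elim disjE conjE) linarith+
    qed (rule Top)
  qed
  have t8: "1 / t0 \<le> To"
  proof (rule le_ln)
    show "0 < 1 / t0" using t0p by simp
    have "ln (1 / t0) = - Q" using t0p by (simp add: ln_div Q_def)
    then show "ln (1 / t0) \<le> ln To" using QE PE2 lx0 lW0 la0 lo5 lo6 lo7
      by (elim disjE conjE) linarith+
  qed (rule Top)
  have t10: "1 / p0 \<le> To"
  proof (rule le_ln)
    show "0 < 1 / p0" using p0p by simp
    have "ln (1 / p0) = - P" using p0p by (simp add: ln_div P_def)
    then show "ln (1 / p0) \<le> ln To" using PE2 lx0 lW0 la0 lo5 lo6 lo7
      by (elim disjE conjE) linarith+
  qed (rule Top)
  show ?thesis
    unfolding T_fun_def p0_def[symmetric] t0_def[symmetric] To_def[symmetric]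
    apply (rule Max.boundedI, simp, simp)
    apply (simp only: insert_iff empty_iff)
    using t1 t2 t3 t4 t5 t6 t8 t10 To_ge(5) To_ge(6) by (elim disjE FalseE; simp only:)
qed

lemma partB:
  fixes n d :: nat and r w a Kw Ka mu L Lmax p \<tau> :: real
  assumes n: "n \<ge> 1" and w: "w \<ge> 0" and a: "0 < a" "a \<le> 1"
    and mu: "0 < mu" "mu \<le> L" "L \<le> Lmax" "Lmax \<le> real n * L"
    and m0: "mu_r d r Kw Ka \<ge> 0"
    and p: "0 < p" "p \<le> 1" and t: "0 < \<tau>" "\<tau> \<le> 1"
  shows "T_optimistic n d r w a Kw Ka mu L Lmax
         \<le> 4 * (1 + p * mu_r d r Kw Ka) * T_fun n w a mu L Lmax p \<tau>"
proof -
  define m where "m = mu_r d r Kw Ka"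
  define T where "T = T_fun n w a mu L Lmax p \<tau>"
  define R where "R = 4 * (1 + p * m) * T"
  have Lp: "L > 0" and Lmp: "Lmax > 0" and np: "real n > 0" and W1: "w + 1 \<ge> 1"
    using mu n w by auto
  have m0': "m \<ge> 0" using m0 m_def by simp
  have T_ge: "sqrt (L / (a * p * mu)) \<le> T" "sqrt (L / (a * \<tau> * mu)) \<le> T"
     "sqrt (sqrt (L * Lmax) * (w + 1) * sqrt (w * \<tau>) / (a * sqrt (real n) * mu)) \<le> T"
     "sqrt (Lmax * w * (w + 1)^2 * p / (real n * mu)) \<le> T"
     "sqrt (Lmax * w / (real n * p * mu)) \<le> T"
     "1 / a \<le> T" "1 / \<tau> \<le> T" "w + 1 \<le> T" "1 / p \<le> T"
    unfolding T_def T_fun_def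
    by (intro Max_ge; simp only: finite.emptyI finite.insertI insert_iff simp_thms)+
  have Tp: "T > 0" using T_ge(8) W1 by linarith
  have la0: "ln a \<le> 0" using a by simp
  have lW0: "ln (w+1) \<ge> 0" using W1 by simp
  have lLM: "ln L \<le> ln Lmax" "ln mu \<le> ln L" using mu Lp by auto
  have lMn: "ln Lmax \<le> ln (real n) + ln L"
  proof -
    have "ln Lmax \<le> ln (real n * L)" using mu Lmp by simp
    thus ?thesis using np Lp by (simp add: ln_mult)
  qed
  have P0: "ln p \<le> 0" and Q0: "ln \<tau> \<le> 0" using p t by auto
  define l2 where "l2 = ln (2::real)"
  have l2p: "l2 > 0" by (simp add: l2_def)
  define E where "E = ln (1 + p * m)"
  have E0: "E \<ge> 0" using p m0' by (simp add: E_def)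
  have Em: "m > 0 \<Longrightarrow> E \<ge> ln p + ln m"
  proof -
    assume "m > 0"
    then have "ln (p * m) \<le> ln (1 + p * m)" using p by (intro lnle) auto
    thus ?thesis using \<open>m > 0\<close> p by (simp add: E_def ln_mult)
  qed
  have pm0: "p * m \<ge> 0" using p m0' by simp
  have Rp: "R > 0" using Tp pm0 unfolding R_def by (intro mult_pos_pos) auto
  have lR: "ln R = 2 * l2 + E + ln T"
  proof -
    have "ln R = ln (4 * (1 + p * m)) + ln T" unfolding R_def using Tp pm0 by (intro ln_mult_pos) auto
    moreover have "ln (4 * (1 + p * m)) = ln 4 + E" unfolding E_def using pm0 by (intro ln_mult_pos) auto
    ultimately have "ln R = ln 4 + E + ln T" by simp
    moreover have "ln (4::real) = 2 * l2" unfolding l2_def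
      using ln_realpow[of 2 2] by simp
    ultimately show ?thesis by simp
  qed
  have lt1: "ln L - ln a - ln p - ln mu \<le> 2 * ln T"
  proof -
    have "ln (sqrt (L / (a * p * mu))) \<le> ln T" using T_ge(1) Lp a p mu by (intro lnle) auto
    thus ?thesis using Lp a p mu by (simp add: LS)
  qed
  have lt2: "ln L - ln a - ln \<tau> - ln mu \<le> 2 * ln T"
  proof -
    have "ln (sqrt (L / (a * \<tau> * mu))) \<le> ln T" using T_ge(2) Lp a t mu by (intro lnle) auto
    thus ?thesis using Lp a t mu by (simp add: LS)
  qed
  have lt3: "w > 0 \<Longrightarrow> ln L + ln Lmax + 2 * ln (w+1) + ln w + ln \<tau> - 2 * ln a - ln (real n) - 2 * ln mu \<le> 4 * ln T"
  proof -
    assume wp: "w > 0"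
    have "ln (sqrt (sqrt (L * Lmax) * (w + 1) * sqrt (w * \<tau>) / (a * sqrt (real n) * mu))) \<le> ln T"
      using T_ge(3) Lp Lmp wp a t mu np by (intro lnle) auto
    thus ?thesis using Lp Lmp wp a t mu np by (simp add: LS)
  qed
  have lt5: "w > 0 \<Longrightarrow> ln Lmax + ln w + 2 * ln (w+1) + ln p - ln (real n) - ln mu \<le> 2 * ln T"
  proof -
    assume wp: "w > 0"
    have "ln (sqrt (Lmax * w * (w + 1)^2 * p / (real n * mu))) \<le> ln T"
      using T_ge(4) Lmp wp p mu np by (intro lnle) auto
    thus ?thesis using Lmp wp p mu np by (simp add: LS)
  qed
  have lt6: "w > 0 \<Longrightarrow> ln Lmax + ln w - ln p - ln (real n) - ln mu \<le> 2 * ln T"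
  proof -
    assume wp: "w > 0"
    have "ln (sqrt (Lmax * w / (real n * p * mu))) \<le> ln T"
      using T_ge(5) Lmp wp p mu np by (intro lnle) auto
    thus ?thesis using Lmp wp p mu np by (simp add: LS)
  qed
  have lt7: "- ln a \<le> ln T"
  proof -
    have "ln (1/a) \<le> ln T" using T_ge(6) a by (intro lnle) auto
    thus ?thesis using a by (simp add: ln_div)
  qed
  have lt9: "ln (w+1) \<le> ln T" using T_ge(8) W1 by (intro lnle) auto
  have lt10: "- ln p \<le> ln T"
  proof -
    have "ln (1/p) \<le> ln T" using T_ge(9) p by (intro lnle) auto
    thus ?thesis using p by (simp add: ln_div)
  qed
  have wc: "(w > 0 \<and> ln w \<ge> ln (w+1) - l2) \<or> (ln (w+1) \<le> l2 \<and> (w > 0 \<longrightarrow> ln w \<le> 0))"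
  proof (cases "w \<ge> 1")
    case True
    then have "ln ((w+1)/2) \<le> ln w" by (intro lnle) auto
    then have "ln (w+1) - l2 \<le> ln w" using W1 by (simp add: ln_div l2_def)
    then show ?thesis using True by auto
  next
    case False
    then have "ln (w+1) \<le> l2" unfolding l2_def using W1 by (intro lnle) auto
    then show ?thesis using False by auto
  qed
  have o1: "sqrt (L * max 1 m / (a * mu)) \<le> R"
  proof (rule le_ln)
    have mx: "max 1 m > 0" by simp
    show "0 < sqrt (L * max 1 m / (a * mu))" using Lp a mu mx by simp
    have e: "2 * ln (sqrt (L * max 1 m / (a * mu))) = ln L + ln (max 1 m) - ln a - ln mu"
      using Lp a mu mx by (simp add: LS)
    have "ln (max 1 m) = 0 \<or> (ln (max 1 m) = ln m \<and> E \<ge> ln p + ln m)"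
      using Em by (cases "m \<le> 1") (auto simp: max_def)
    then show "ln (sqrt (L * max 1 m / (a * mu))) \<le> ln R" using e lR lt1 E0 l2p P0
      by (elim disjE conjE) linarith+
  qed (rule Rp)
  have o2: "sqrt (L powr (2/3) * Lmax powr (1/3) * (w + 1) / (a * real n powr (1/3) * mu)) \<le> R"
  proof (rule le_ln)
    show "0 < sqrt (L powr (2/3) * Lmax powr (1/3) * (w + 1) / (a * real n powr (1/3) * mu))"
      using Lp Lmp W1 a mu np by simp
    have e: "6 * ln (sqrt (L powr (2/3) * Lmax powr (1/3) * (w + 1) / (a * real n powr (1/3) * mu)))
      = 2 * ln L + ln Lmax + 3 * ln (w+1) - 3 * ln a - ln (real n) - 3 * ln mu"
      using Lp Lmp W1 a mu np by (simp add: LS)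
    show "ln (sqrt (L powr (2/3) * Lmax powr (1/3) * (w + 1) / (a * real n powr (1/3) * mu))) \<le> ln R"
      using wc
    proof (elim disjE conjE)
      assume wp: "w > 0" and lw: "ln w \<ge> ln (w+1) - l2"
      show ?thesis using e lR lt2 lt3[OF wp] lw E0 l2p by linarith
    next
      assume "ln (w+1) \<le> l2"
      then show ?thesis using e lR lt1 P0 lMn la0 lLM E0 l2p by linarith
    qed
  qed (rule Rp)
  have o3: "sqrt (L powr (1/2) * Lmax powr (1/2) * (w + 1) powr (3/2) / (sqrt (a * real n) * mu)) \<le> R"
  proof (rule le_ln)
    show "0 < sqrt (L powr (1/2) * Lmax powr (1/2) * (w + 1) powr (3/2) / (sqrt (a * real n) * mu))"
      using Lp Lmp W1 a mu np by simp
    have e: "4 * ln (sqrt (L powr (1/2) * Lmax powr (1/2) * (w + 1) powr (3/2) / (sqrt (a * real n) * mu)))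
      = ln L + ln Lmax + 3 * ln (w+1) - ln a - ln (real n) - 2 * ln mu"
      using Lp Lmp W1 a mu np by (simp add: LS)
    show "ln (sqrt (L powr (1/2) * Lmax powr (1/2) * (w + 1) powr (3/2) / (sqrt (a * real n) * mu))) \<le> ln R"
      using wc
    proof (elim disjE conjE)
      assume wp: "w > 0" and lw: "ln w \<ge> ln (w+1) - l2"
      show ?thesis using e lR lt1 lt5[OF wp] lw E0 l2p by linarith
    next
      assume "ln (w+1) \<le> l2"
      then show ?thesis using e lR lt1 P0 lMn la0 lLM E0 l2p by linarith
    qed
  qed (rule Rp)
  have o4: "sqrt (Lmax * w * max (w + 1) m / (real n * mu)) \<le> R"
  proof (cases "w = 0")
    case True then show ?thesis using Rp by simp
  next
    case False
    then have wp: "w > 0" using w by simp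
    show ?thesis
    proof (rule le_ln)
      have mx: "max (w+1) m > 0" using W1 by simp
      show "0 < sqrt (Lmax * w * max (w + 1) m / (real n * mu))" using Lmp wp np mu mx by simp
      have e: "2 * ln (sqrt (Lmax * w * max (w + 1) m / (real n * mu)))
        = ln Lmax + ln w + ln (max (w+1) m) - ln (real n) - ln mu"
        using Lmp wp np mu mx by (simp add: LS)
      have "ln (max (w+1) m) = ln (w+1) \<or> (ln (max (w+1) m) = ln m \<and> E \<ge> ln p + ln m)"
        using Em W1 by (cases "m \<le> w+1") (auto simp: max_def)
      then show "ln (sqrt (Lmax * w * max (w + 1) m / (real n * mu))) \<le> ln R"
        using wc
      proof (elim disjE conjE)
        assume "ln (max (w+1) m) = ln (w+1)" "ln w \<ge> ln (w+1) - l2"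
        then show ?thesis using e lR lt5[OF wp] lt6[OF wp] E0 l2p by linarith
      next
        assume h: "ln (max (w+1) m) = ln (w+1)" "ln (w+1) \<le> l2" "w > 0 \<longrightarrow> ln w \<le> 0"
        have "ln w \<le> 0" using h(3) wp by blast
        then show ?thesis using h(1,2) e lR lt1 P0 lMn la0 lLM E0 l2p by linarith
      next
        assume "ln (max (w + 1) m) = ln m" "ln p + ln m \<le> E"
        then show ?thesis using e lR lt6[OF wp] E0 l2p by linarith
      next
        assume "ln (max (w + 1) m) = ln m" "ln p + ln m \<le> E"
        then show ?thesis using e lR lt6[OF wp] E0 l2p by linarith
      qed
    qed (rule Rp)
  qed
  have o5: "1 / a \<le> R"
  proof (rule le_ln)
    show "0 < 1 / a" using a by simp
    show "ln (1 / a) \<le> ln R" using a lR lt7 E0 l2p by (simp add: ln_div)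
  qed (rule Rp)
  have o6: "w + 1 \<le> R"
  proof (rule le_ln)
    show "0 < w + 1" using W1 by simp
    show "ln (w + 1) \<le> ln R" using lR lt9 E0 l2p by simp
  qed (rule Rp)
  have o7: "m \<le> R"
  proof (cases "m = 0")
    case True then show ?thesis using Rp by simp
  next
    case False
    then have mp: "m > 0" using m0' by simp
    show ?thesis
    proof (rule le_ln)
      show "0 < m" using mp .
      show "ln m \<le> ln R" using lR Em[OF mp] lt10 l2p by simp
    qed (rule Rp)
  qed
  show ?thesis
    unfolding T_optimistic_def m_def[symmetric] T_def[symmetric] R_def[symmetric]
    apply (rule Max.boundedI, simp, simp)
    apply (simp only: insert_iff empty_iff)
    using o1 o2 o3 o4 o5 o6 o7 by (elim disjE FalseE; simp only:)
qed

lemma p0_bounds: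
  fixes n d :: nat and r w a Kw Ka L Lmax :: real
  assumes n: "n \<ge> 1" and w: "w \<ge> 0" and a: "0 < a"
    and L: "0 < L" "L \<le> Lmax"
    and m0: "mu_r d r Kw Ka \<ge> 0"
  shows "0 < p_opt n d r w a Kw Ka L Lmax" "p_opt n d r w a Kw Ka L Lmax \<le> 1"
    "p_opt n d r w a Kw Ka L Lmax * mu_r d r Kw Ka \<le> 1"
    "0 < tau_opt n d r w a Kw Ka L Lmax" "tau_opt n d r w a Kw Ka L Lmax \<le> 1"
proof -
  define m where "m = mu_r d r Kw Ka"
  define x where "x = L * real n / Lmax"
  define p0 where "p0 = p_opt n d r w a Kw Ka L Lmax"
  have xp: "x > 0" using L n unfolding x_def by (intro divide_pos_pos mult_pos_pos) auto
  have m0': "m \<ge> 0" using m0 m_def by simp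
  define c2 where "c2 = (if m = 0 then 1 else 1/m)"
  define c3 where "c3 = x powr (1/3) / (w+1)"
  define c4a where "c4a = 1/(w+1)"
  define c4b where "c4b = x powr (1/2) / (sqrt a * (w+1) powr (3/2))"
  have p0eq: "p0 = Min {1, c2, c3, max c4a c4b}"
    by (simp add: p0_def p_opt_def c2_def c3_def c4a_def c4b_def m_def x_def)
  have c2p: "c2 > 0" using m0' by (simp add: c2_def)
  have c3p: "c3 > 0" using xp w by (simp add: c3_def)
  have c4ap: "c4a > 0" using w by (simp add: c4a_def)
  have c4bp: "c4b > 0" using xp w a by (simp add: c4b_def)
  have p0p: "p0 > 0" using c2p c3p c4ap c4bp by (simp add: p0eq)
  have p0le: "p0 \<le> 1" "p0 \<le> c2" by (simp_all add: p0eq)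
  have "p0 * m \<le> 1"
  proof (cases "m = 0")
    case True then show ?thesis by simp
  next
    case False
    then have "m > 0" using m0' by simp
    then have "p0 * m \<le> c2 * m" using p0le(2) by (intro mult_right_mono) auto
    also have "\<dots> = 1" using False by (simp add: c2_def)
    finally show ?thesis .
  qed
  then show "0 < p_opt n d r w a Kw Ka L Lmax" "p_opt n d r w a Kw Ka L Lmax \<le> 1"
    "p_opt n d r w a Kw Ka L Lmax * mu_r d r Kw Ka \<le> 1"
    using p0p p0le by (simp_all add: p0_def m_def)
  have d1p: "x powr (1/3) * (1/(w+1)) > 0" using xp w by simp
  have d2p: "x powr (1/3) * (p0 powr (1/3) / (w+1) powr (2/3)) > 0" using xp w p0p by simp
  show "0 < tau_opt n d r w a Kw Ka L Lmax" "tau_opt n d r w a Kw Ka L Lmax \<le> 1"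
    unfolding tau_opt_def p0_def[symmetric] x_def[symmetric] using d1p d2p
    by (simp_all add: min_mult_distrib_left)
qed

theorem theorem3:
  shows "\<exists>C::real. C > 0 \<and>
    (\<forall>(n::nat) (d::nat) (r::real) (w::real) (a::real) (Kw::real) (Ka::real)
       (mu::real) (L::real) (Lmax::real).
      n \<ge> 1 \<longrightarrow> d \<ge> 1 \<longrightarrow> 0 \<le> r \<longrightarrow> r \<le> 1 \<longrightarrow> w \<ge> 0 \<longrightarrow>
      0 < a \<longrightarrow> a \<le> 1 \<longrightarrow> Kw > 0 \<longrightarrow> Ka > 0 \<longrightarrow>
      0 < mu \<longrightarrow> mu \<le> L \<longrightarrow> L \<le> Lmax \<longrightarrow> Lmax \<le> real n * L \<longrightarrow>
      (let p0 = p_opt n d r w a Kw Ka L Lmax;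
           t0 = tau_opt n d r w a Kw Ka L Lmax;
           Topt = T_optimistic n d r w a Kw Ka mu L Lmax
       in (\<forall>p \<tau>. 0 < p \<longrightarrow> p \<le> 1 \<longrightarrow> 0 < \<tau> \<longrightarrow> \<tau> \<le> 1 \<longrightarrow>
              M_fun n d r w a Kw Ka mu L Lmax p0 t0 \<le> C * M_fun n d r w a Kw Ka mu L Lmax p \<tau>)
        \<and> T_fun n w a mu L Lmax p0 t0 \<le> C * Topt
        \<and> Topt \<le> C * T_fun n w a mu L Lmax p0 t0
        \<and> M_fun n d r w a Kw Ka mu L Lmax p0 t0 \<le> C * (K_r r Kw Ka * Topt + real d)
        \<and> K_r r Kw Ka * Topt + real d \<le> C * M_fun n d r w a Kw Ka mu L Lmax p0 t0))"
proof (intro exI[of _ 8] conjI allI impI)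
  show "(0::real) < 8" by simp
  fix n d :: nat and r w a Kw Ka mu L Lmax :: real
  assume n: "n \<ge> 1" and d: "d \<ge> 1" and r: "0 \<le> r" "r \<le> 1" and w: "w \<ge> 0"
    and a: "0 < a" "a \<le> 1" and K: "Kw > 0" "Ka > 0"
    and mu: "0 < mu" "mu \<le> L" "L \<le> Lmax" "Lmax \<le> real n * L"
  define K where "K = K_r r Kw Ka"
  define m where "m = mu_r d r Kw Ka"
  have Kp: "K > 0" unfolding K_def K_r_def using r K
    by (smt (verit, best) mult_nonneg_nonneg mult_pos_pos)
  have Km: "K * m = r * real d" using Kp unfolding m_def mu_r_def K_def K_r_def by simp
  have m0: "m \<ge> 0" unfolding m_def mu_r_def using r Kp unfolding K_def K_r_def by simp
  have Meq: "\<And>p t. M_fun n d r w a Kw Ka mu L Lmax p t = K * (1 + p * m) * T_fun n w a mu L Lmax p t + real d"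
  proof -
    fix p t
    have "(1 - r) * Kw + r * (Ka + p * real d) = K + p * (r * real d)"
      unfolding K_def K_r_def by (simp add: algebra_simps)
    also have "\<dots> = K + p * (K * m)" by (simp only: Km)
    also have "\<dots> = K * (1 + p * m)" by (simp add: algebra_simps)
    finally have "(1 - r) * Kw + r * (Ka + p * real d) = K * (1 + p * m)" .
    then show "M_fun n d r w a Kw Ka mu L Lmax p t = K * (1 + p * m) * T_fun n w a mu L Lmax p t + real d"
      unfolding M_fun_def by simp
  qed
  define p0 where "p0 = p_opt n d r w a Kw Ka L Lmax"
  define t0 where "t0 = tau_opt n d r w a Kw Ka L Lmax"
  define To where "To = T_optimistic n d r w a Kw Ka mu L Lmax"
  define T0 where "T0 = T_fun n w a mu L Lmax p0 t0"
  have Lp: "L > 0" using mu by simp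
  have pb: "0 < p0" "p0 \<le> 1" "p0 * m \<le> 1" "0 < t0" "t0 \<le> 1"
    using p0_bounds[OF n w a(1) Lp mu(3), of d r Kw Ka] m0 unfolding p0_def t0_def m_def by auto
  have A: "T0 \<le> To" using partA[OF n w a mu, of d r Kw Ka] m0
    unfolding T0_def To_def p0_def t0_def m_def by simp
  have B: "\<And>p t. 0 < p \<Longrightarrow> p \<le> 1 \<Longrightarrow> 0 < t \<Longrightarrow> t \<le> 1 \<Longrightarrow>
      To \<le> 4 * (1 + p * m) * T_fun n w a mu L Lmax p t"
    using partB[OF n w a mu, of d r Kw Ka] m0 unfolding To_def m_def by simp
  have B0: "To \<le> 4 * (1 + p0 * m) * T0" using B[OF pb(1,2,4,5)] unfolding T0_def .
  have T0p: "T0 \<ge> 0"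
  proof -
    have "w + 1 \<le> T0" unfolding T0_def T_fun_def
      by (intro Max_ge; simp only: finite.emptyI finite.insertI insert_iff simp_thms)
    then show ?thesis using w by simp
  qed
  have pm0: "p0 * m \<ge> 0" using pb m0 by simp
  have Top: "To \<ge> 0" using A T0p by simp
  have KTo: "K * To \<ge> 0" using Kp Top by simp
  have dpos: "real d \<ge> 0" by simp
  have M0: "M_fun n d r w a Kw Ka mu L Lmax p0 t0 = K * (1 + p0 * m) * T0 + real d"
    using Meq unfolding T0_def by simp
  have M0le: "M_fun n d r w a Kw Ka mu L Lmax p0 t0 \<le> 2 * (K * To + real d)"
  proof -
    have "(1 + p0 * m) * T0 \<le> 2 * T0" using pb(3) T0p by (intro mult_right_mono) auto
    then have "(1 + p0 * m) * T0 \<le> 2 * To" using A by linarith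
    then have "K * ((1 + p0 * m) * T0) \<le> K * (2 * To)" using Kp by (intro mult_left_mono) auto
    then show ?thesis using M0 KTo dpos by (simp add: algebra_simps)
  qed
  have lowB: "\<And>p t. 0 < p \<Longrightarrow> p \<le> 1 \<Longrightarrow> 0 < t \<Longrightarrow> t \<le> 1 \<Longrightarrow>
      K * To + real d \<le> 4 * M_fun n d r w a Kw Ka mu L Lmax p t"
  proof -
    fix p t :: real assume h: "0 < p" "p \<le> 1" "0 < t" "t \<le> 1"
    have "K * To \<le> K * (4 * (1 + p * m) * T_fun n w a mu L Lmax p t)"
      using B[OF h] Kp by (intro mult_left_mono) auto
    then show "K * To + real d \<le> 4 * M_fun n d r w a Kw Ka mu L Lmax p t"
      using Meq[of p t] dpos by (simp add: algebra_simps)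
  qed
  show "let p0 = p_opt n d r w a Kw Ka L Lmax;
           t0 = tau_opt n d r w a Kw Ka L Lmax;
           Topt = T_optimistic n d r w a Kw Ka mu L Lmax
       in (\<forall>p \<tau>. 0 < p \<longrightarrow> p \<le> 1 \<longrightarrow> 0 < \<tau> \<longrightarrow> \<tau> \<le> 1 \<longrightarrow>
              M_fun n d r w a Kw Ka mu L Lmax p0 t0 \<le> 8 * M_fun n d r w a Kw Ka mu L Lmax p \<tau>)
        \<and> T_fun n w a mu L Lmax p0 t0 \<le> 8 * Topt
        \<and> Topt \<le> 8 * T_fun n w a mu L Lmax p0 t0
        \<and> M_fun n d r w a Kw Ka mu L Lmax p0 t0 \<le> 8 * (K_r r Kw Ka * Topt + real d)
        \<and> K_r r Kw Ka * Topt + real d \<le> 8 * M_fun n d r w a Kw Ka mu L Lmax p0 t0"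
    unfolding Let_def p0_def[symmetric] t0_def[symmetric] To_def[symmetric] T0_def[symmetric] K_def[symmetric]
  proof (intro conjI allI impI)
    fix p t :: real assume h: "0 < p" "p \<le> 1" "0 < t" "t \<le> 1"
    show "M_fun n d r w a Kw Ka mu L Lmax p0 t0 \<le> 8 * M_fun n d r w a Kw Ka mu L Lmax p t"
      using M0le[unfolded distrib_left] lowB[OF h] by linarith
  next
    show "T0 \<le> 8 * To" using A Top by linarith
  next
    have "(1 + p0 * m) * T0 \<le> 2 * T0" using pb(3) T0p by (intro mult_right_mono) auto
    then show "To \<le> 8 * T0" using B0 by linarith
  next
    show "M_fun n d r w a Kw Ka mu L Lmax p0 t0 \<le> 8 * (K * To + real d)" unfolding distrib_left
      using M0le[unfolded distrib_left] KTo dpos by linarith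
  next
    show "K * To + real d \<le> 8 * M_fun n d r w a Kw Ka mu L Lmax p0 t0"
      using lowB[OF pb(1,2,4,5)] M0le[unfolded distrib_left] KTo dpos by linarith
  qed
qed

end
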